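(* Let $m\geq 1$, $n\geq 3$, let $k\in\{1,\ldots,m\}$ and let $i,j\in V^k$. A walk of length $n-1$ from $i$ to $j$ exists in $D^m_n$ if and only if one of the following holds: $i=1$ and $j=(k-1)(n-1)+n$; or $i=(k-1)(n-1)+2$ and $j=1$; or $i=(k-1)(n-1)+\ell$ and $j=i-1$ for some $\ell\in\{3,\ldots,n\}$. Moreover, in each of these cases there is exactly one walk of length $n-1$ from $i$ to $j$ in $D^m_n$.
   Context: For integers $m\geq 1$, $n\geq 3$, the oriented Dutch windmill graph $D^m_n$ is the directed graph with vertex set $V=\{1,2,\ldots,m(n-1)+1\}$ whose directed edges $(a,b)$ are exactly: $(1,(k-1)(n-1)+2)$ for $k\in\{1,\ldots,m\}$; $((k-1)(n-1)+i,(k-1)(n-1)+i+1)$ for $k\in\{1,\ldots,m\}$ and $i\in\{2,\ldots,n-1\}$; and $((k-1)(n-1)+n,1)$ for $k\in\{1,\ldots,m\}$. For $k\in\{1,\ldots,m\}$, $V^k=\{1\}\cup\{(k-1)(n-1)+\ell:\ \ell=2,\ldots,n\}$ is the vertex set of the $k$-th directed cycle $\langle 1,(k-1)(n-1)+2,\ldots,(k-1)(n-1)+n,1\rangle$. A walk is a sequence of vertices $\langle v_1,\ldots,v_r\rangle$ in which each $(v_t,v_{t+1})$ is an edge; its length is $r-1$. *)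

theory Defs
  imports Main
begin

definition dw_verts :: "nat \<Rightarrow> nat \<Rightarrow> nat set" where
  "dw_verts m n = {1..m*(n-1)+1}"

definition dw_edge :: "nat \<Rightarrow> nat \<Rightarrow> nat \<Rightarrow> nat \<Rightarrow> bool" where
  "dw_edge m n a b \<longleftrightarrow>
     (\<exists>k\<in>{1..m}. a = 1 \<and> b = (k-1)*(n-1)+2)
   \<or> (\<exists>k\<in>{1..m}. \<exists>i\<in>{2..n-1}. a = (k-1)*(n-1)+i \<and> b = (k-1)*(n-1)+i+1)
   \<or> (\<exists>k\<in>{1..m}. a = (k-1)*(n-1)+n \<and> b = 1)"

definition dw_cycle :: "nat \<Rightarrow> nat \<Rightarrow> nat set" where
  "dw_cycle n k = {1} \<union> {(k-1)*(n-1)+l | l. l \<in> {2..n}}"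

definition dw_walk :: "nat \<Rightarrow> nat \<Rightarrow> nat list \<Rightarrow> bool" where
  "dw_walk m n w \<longleftrightarrow> w \<noteq> [] \<and> set w \<subseteq> dw_verts m n \<and>
     (\<forall>t. Suc t < length w \<longrightarrow> dw_edge m n (w ! t) (w ! Suc t))"

definition dw_walk_len_from_to :: "nat \<Rightarrow> nat \<Rightarrow> nat \<Rightarrow> nat \<Rightarrow> nat \<Rightarrow> nat list \<Rightarrow> bool" where
  "dw_walk_len_from_to m n r i j w \<longleftrightarrow>
     dw_walk m n w \<and> length w = r + 1 \<and> hd w = i \<and> last w = j"

end

theory Submission
  imports Defs
begin

definition pz :: "nat \<Rightarrow> nat \<Rightarrow> nat" where
  "pz n v = (if v = 1 then 0 else (v-2) mod (n-1) + 1)"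

lemma pz_lt: "n \<ge> 3 \<Longrightarrow> pz n v < n"
proof -
  assume "n \<ge> 3"
  then have "(v-2) mod (n-1) < n-1" by simp
  then have "Suc ((v-2) mod (n-1)) < n" using \<open>n \<ge> 3\<close> by linarith
  then show ?thesis unfolding pz_def by auto
qed

lemma pz0: "pz n v = 0 \<longleftrightarrow> v = 1"
  unfolding pz_def by auto

lemma pz_off: assumes "n \<ge> 3" "l \<in> {2..n}"
  shows "pz n ((k-1)*(n-1)+l) = l - 1"
proof -
  obtain c where c: "l = c + 2" using assms(2) by (metis atLeastAtMost_iff le_add_diff_inverse2)
  have e: "(k-1)*(n-1)+l - 2 = c + (k-1)*(n-1)" using c by simp
  have "c mod (n-1) = c" using assms c by auto
  then have "((k-1)*(n-1)+l - 2) mod (n-1) = c" unfolding e by simp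
  then show ?thesis using c unfolding pz_def by auto
qed

lemma edge_pz: assumes "n \<ge> 3" "dw_edge m n a b"
  shows "pz n b = (pz n a + 1) mod n"
  using assms(2) unfolding dw_edge_def
proof (elim disjE bexE conjE)
  fix k assume "a = 1" "b = (k-1)*(n-1)+2"
  then show ?thesis using pz_off[OF assms(1), of 2 k] assms(1) by (simp add: pz_def)
next
  fix k i assume h: "i \<in> {2..n-1}" "a = (k-1)*(n-1)+i" "b = (k-1)*(n-1)+i+1"
  have "pz n a = i - 1" using pz_off[OF assms(1), of i k] h by auto
  moreover have "pz n b = i" using pz_off[OF assms(1), of "i+1" k] h by auto
  moreover have "i < n" using h by auto
  ultimately show ?thesis using h assms(1) by auto
next
  fix k assume h: "a = (k-1)*(n-1)+n" "b = 1"
  have "pz n a = n - 1" using pz_off[OF assms(1), of n k] h assms by auto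
  then show ?thesis using h assms(1) by (simp add: pz_def)
qed

lemma edge_fwd: assumes "n \<ge> 3" "dw_edge m n a b" "a \<noteq> 1"
  shows "b = (if pz n a = n-1 then 1 else a+1)"
  using assms(2) unfolding dw_edge_def
proof (elim disjE bexE conjE)
  fix k assume "a = 1" then show ?thesis using assms by simp
next
  fix k i assume h: "i \<in> {2..n-1}" "a = (k-1)*(n-1)+i" "b = (k-1)*(n-1)+i+1"
  have "pz n a = i - 1" using pz_off[OF assms(1), of i k] h by auto
  then show ?thesis using h assms(1) by auto
next
  fix k assume h: "a = (k-1)*(n-1)+n" "b = 1"
  have "pz n a = n - 1" using pz_off[OF assms(1), of n k] h assms by auto
  then show ?thesis using h assms(1) by (simp add: pz_def)
qed

lemma edge_bwd: assumes "dw_edge m n a b" "b \<noteq> 1"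
  shows "a = 1 \<or> a = b - 1"
  using assms unfolding dw_edge_def by auto

lemma walk_pz: assumes "n \<ge> 3" "dw_walk m n w" "t < length w"
  shows "pz n (w!t) = (pz n (hd w) + t) mod n"
  using assms(3)
proof (induction t)
  case 0
  then show ?case using pz_lt[OF assms(1)] by (cases w) auto
next
  case (Suc t)
  have "dw_edge m n (w!t) (w!Suc t)" using assms(2) Suc.prems unfolding dw_walk_def by auto
  then have "pz n (w!Suc t) = (pz n (w!t) + 1) mod n" using edge_pz assms(1) by blast
  then show ?case using Suc by (simp add: mod_Suc_eq)
qed


lemma walk_uniq:
  assumes n3: "n \<ge> 3" and w: "dw_walk m n w" and w': "dw_walk m n w'"
    and lw: "length w = n" and lw': "length w' = n"
    and hd: "hd w = hd w'" and la: "last w = last w'"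
  shows "w = w'"
proof -
  define p where "p = pz n (hd w)"
  have pn: "p < n" unfolding p_def using pz_lt n3 by blast
  define t0 where "t0 = (n - p) mod n"
  have t0n: "t0 < n" unfolding t0_def using n3 by simp
  have P: "pz n (w!t) = (p+t) mod n" if "t < n" for t
    using walk_pz[OF n3 w] that lw p_def by simp
  have P': "pz n (w'!t) = (p+t) mod n" if "t < n" for t
    using walk_pz[OF n3 w'] that lw' p_def hd by simp
  have A: "w!t = 1 \<longleftrightarrow> w'!t = 1" if "t < n" for t
    using P[OF that] P'[OF that] pz0 by metis
  have before: "(p+t) mod n \<noteq> 0" if "t < t0" for t
  proof (cases "p = 0")
    case True then show ?thesis using that t0_def by simp
  next
    case False
    then have "t0 = n - p" unfolding t0_def using pn by simp
    then have "p + t < n" "p + t > 0" using that False by auto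
    then show ?thesis by simp
  qed
  have after: "(p+t) mod n \<noteq> 0" if "t0 < t" "t < n" for t
  proof (cases "p = 0")
    case True then show ?thesis using that t0_def by simp
  next
    case False
    then have "t0 = n - p" unfolding t0_def using pn by simp
    then have "p + t = (p + t - n) + n" "p + t - n < n" "p + t - n > 0" using that False pn by auto
    then show ?thesis by (metis mod_add_self2 mod_less neq0_conv)
  qed
  have fwd: "t \<le> t0 \<longrightarrow> w!t = w'!t" for t
  proof (induction t)
    case 0
    have "w \<noteq> []" "w' \<noteq> []" using lw lw' n3 by auto
    then show ?case using hd by (simp add: hd_conv_nth)
  next
    case (Suc t)
    show ?case
    proof
      assume st: "Suc t \<le> t0"
      then have eq: "w!t = w'!t" using Suc by simp
      have ne: "w!t \<noteq> 1" using P[of t] before[of t] st t0n pz0 by (metis Suc_le_lessD less_trans)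
      have e1: "dw_edge m n (w!t) (w!Suc t)" using w lw st t0n unfolding dw_walk_def by auto
      have e2: "dw_edge m n (w'!t) (w'!Suc t)" using w' lw' st t0n unfolding dw_walk_def by auto
      show "w!Suc t = w'!Suc t" using edge_fwd[OF n3 e1 ne] edge_fwd[OF n3 e2] ne eq by simp
    qed
  qed
  have bwd: "d \<le> n - 1 - t0 \<longrightarrow> w!(n-1-d) = w'!(n-1-d)" for d
  proof (induction d)
    case 0 then show ?case using la lw lw' n3
      by (metis diff_zero last_conv_nth list.size(3) not_numeral_le_zero)
  next
    case (Suc d)
    show ?case
    proof
      assume sd: "Suc d \<le> n - 1 - t0"
      define t where "t = n - 1 - Suc d"
      have t1: "Suc t = n - 1 - d" "t0 < Suc t" "Suc t < n" using sd t0n unfolding t_def by auto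
      have eq: "w!Suc t = w'!Suc t" using Suc sd t1 by simp
      have ne: "w!Suc t \<noteq> 1" using P[of "Suc t"] after[of "Suc t"] t1 pz0 by metis
      have e1: "dw_edge m n (w!t) (w!Suc t)" using w lw t1(3) unfolding dw_walk_def by metis
      have e2: "dw_edge m n (w'!t) (w'!Suc t)" using w' lw' t1(3) unfolding dw_walk_def by metis
      have "w!t = w'!t"
        using edge_bwd[OF e1 ne] edge_bwd[OF e2] ne eq A[of t] t1 by auto
      then show "w!(n-1-Suc d) = w'!(n-1-Suc d)" unfolding t_def .
    qed
  qed
  show ?thesis
  proof (rule nth_equalityI)
    show "length w = length w'" using lw lw' by simp
  next
    fix t assume "t < length w"
    then have tn: "t < n" using lw by simp
    show "w!t = w'!t"
    proof (cases "t \<le> t0")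
      case True then show ?thesis using fwd by blast
    next
      case False
      then have "n - 1 - (n - 1 - t) = t" "n - 1 - t \<le> n - 1 - t0" using tn by auto
      then show ?thesis using bwd[of "n-1-t"] by metis
    qed
  qed
qed


lemma succ_upt: "(\<And>x. a \<le> x \<Longrightarrow> x+1 < b \<Longrightarrow> P x (x+1)) \<Longrightarrow> successively P [a..<b]"
  unfolding successively_conv_nth by auto

lemma walk_exists:
  assumes n3: "n \<ge> 3" and k: "k \<in> {1..m}" and l: "l \<in> {2..n+1}"
  defines "f \<equiv> \<lambda>x. (k-1)*(n-1) + x"
  defines "W \<equiv> map f [l..<n+1] @ 1 # map f [2..<l]"
  shows "dw_walk m n W" "length W = n"
    "hd W = (if l \<le> n then f l else 1)" "last W = (if l = 2 then 1 else f (l-1))"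
proof -
  show "length W = n" unfolding W_def using l by auto
  show "hd W = (if l \<le> n then f l else 1)" unfolding W_def using l by (auto simp: hd_map upt_rec)
  show "last W = (if l = 2 then 1 else f (l-1))" unfolding W_def using l
    by (auto simp: last_map)
  have kk: "(k-1)*(n-1) + n \<le> m*(n-1)+1"
  proof -
    have "(k-1)*(n-1) + n = k*(n-1) + 1" using k n3 by (cases k) auto
    also have "\<dots> \<le> m*(n-1)+1" using k by auto
    finally show ?thesis .
  qed
  have sv: "set W \<subseteq> dw_verts m n"
    unfolding W_def dw_verts_def f_def using kk l by auto
  have E1: "dw_edge m n (f x) (f (x+1))" if "2 \<le> x" "x+1 < n+1" for x
    unfolding dw_edge_def f_def using that k by fastforce
  have E2: "dw_edge m n (f n) 1" unfolding dw_edge_def f_def using k by blast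
  have E3: "dw_edge m n 1 (f 2)" unfolding dw_edge_def f_def using k by blast
  have s1: "successively (dw_edge m n) (map f [l..<n+1])"
    unfolding successively_map by (rule succ_upt) (use E1 l in auto)
  have s2: "successively (dw_edge m n) (map f [2..<l])"
    unfolding successively_map by (rule succ_upt) (use E1 l in auto)
  have s3: "successively (dw_edge m n) (1 # map f [2..<l])"
    using s2 E3 l by (auto simp: successively_Cons hd_map upt_rec)
  have "successively (dw_edge m n) W"
    unfolding W_def successively_append_iff using s1 s3 E2 l by (auto simp: last_map)
  then show "dw_walk m n W" unfolding dw_walk_def successively_conv_nth using sv W_def by auto
qed

theorem lemma2p1:
  fixes m n k i j :: nat
  assumes "m \<ge> 1" and "n \<ge> 3" and "k \<in> {1..m}"
    and "i \<in> dw_cycle n k" and "j \<in> dw_cycle n k"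
  defines "C \<equiv> (i = 1 \<and> j = (k-1)*(n-1)+n)
              \<or> (i = (k-1)*(n-1)+2 \<and> j = 1)
              \<or> (\<exists>l\<in>{3..n}. i = (k-1)*(n-1)+l \<and> j = i - 1)"
  shows "((\<exists>w. dw_walk_len_from_to m n (n-1) i j w) \<longleftrightarrow> C)
       \<and> (C \<longrightarrow> (\<exists>!w. dw_walk_len_from_to m n (n-1) i j w))"
proof -
  note n3 = assms(2)
  define f where "f = (\<lambda>x. (k-1)*(n-1) + x)"
  have ci: "i = 1 \<or> (\<exists>l\<in>{2..n}. i = f l)" using assms(4) unfolding dw_cycle_def f_def by auto
  have cj: "j = 1 \<or> (\<exists>l\<in>{2..n}. j = f l)" using assms(5) unfolding dw_cycle_def f_def by auto
  have pf: "pz n (f l) = l - 1" if "l \<in> {2..n}" for l using pz_off[OF n3 that] f_def by simp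
  have uniq: "w = w'" if "dw_walk_len_from_to m n (n-1) i j w" "dw_walk_len_from_to m n (n-1) i j w'" for w w'
    using that walk_uniq[OF n3, of m w w'] n3 unfolding dw_walk_len_from_to_def by auto
  have ex: "\<exists>w. dw_walk_len_from_to m n (n-1) i j w" if C
  proof -
    obtain l where l: "l \<in> {2..n+1}" and hi: "i = (if l \<le> n then f l else 1)"
      and hj: "j = (if l = 2 then 1 else f (l-1))"
    proof -
      consider "i = 1 \<and> j = f n" | "i = f 2 \<and> j = 1" | l where "l\<in>{3..n}" "i = f l" "j = i - 1"
        using \<open>C\<close> unfolding C_def f_def by blast
      then show ?thesis
      proof cases
        case 1 then show ?thesis using that[of "n+1"] n3 by auto
      next
        case 2 then show ?thesis using that[of 2] n3 by auto
      next
        case 3 then show ?thesis using that[of l] n3 unfolding f_def by auto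
      qed
    qed
    note we = walk_exists[OF n3 assms(3) l]
    show ?thesis unfolding dw_walk_len_from_to_def
      by (rule exI[of _ "map f [l..<n+1] @ 1 # map f [2..<l]"])
         (use we hi hj n3 in \<open>auto simp: f_def\<close>)
  qed
  have toC: C if "dw_walk_len_from_to m n (n-1) i j w" for w
  proof -
    have w: "dw_walk m n w" "length w = n" "hd w = i" "last w = j"
      using that n3 unfolding dw_walk_len_from_to_def by auto
    have "w \<noteq> []" using w n3 by auto
    then have "last w = w!(n-1)" using w by (simp add: last_conv_nth)
    then have pj: "pz n j = (pz n i + (n-1)) mod n" using walk_pz[OF n3 w(1), of "n-1"] w n3 by simp
    from ci show C
    proof
      assume i1: "i = 1"
      have "pz n 1 = 0" by (simp add: pz_def)
      then have "pz n j = n - 1" using pj n3 i1 by simp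
      then have pjn: "pz n j = n - 1" .
      then have "j \<noteq> 1" using n3 by (auto simp: pz_def)
      then obtain l' where l': "l' \<in> {2..n}" "j = f l'" using cj by blast
      then have "l' - 1 = n - 1" using pf pjn by simp
      then have "l' = n" using l' by auto
      then have "j = f n" using l' by simp
      then show C using i1 unfolding C_def f_def by simp
    next
      assume "\<exists>l\<in>{2..n}. i = f l"
      then obtain l where l: "l \<in> {2..n}" "i = f l" by blast
      have "pz n j = (l - 1 + (n-1)) mod n" using pj pf l by simp
      also have "\<dots> = l - 2"
      proof -
        have "l - 1 + (n-1) = (l-2) + n" "l - 2 < n" using l n3 by auto
        then show ?thesis by (metis mod_add_self2 mod_less)
      qed
      finally have pj2: "pz n j = l - 2" .
      show C
      proof (cases "l = 2")
        case True
        then have "j = 1" using pj2 pz0 by simp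
        then show C using True l unfolding C_def f_def by simp
      next
        case False
        then have "j \<noteq> 1" using pj2 l by (auto simp: pz_def)
        then obtain l' where l': "l' \<in> {2..n}" "j = f l'" using cj by blast
        then have "l' - 1 = l - 2" using pf pj2 by simp
        then have "l' = l - 1" using l' l False by auto
        then have "j = i - 1" using l' l False unfolding f_def by auto
        then show C using l False unfolding C_def f_def by auto
      qed
    qed
  qed
  show ?thesis using ex toC uniq by blast
qed

end
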